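(* Let $L$ be the line graph of the Petersen graph ($15$ vertices). Coloring each pair of distinct vertices of $L$ by $b$, $a$, $c$ according as their distance in $L$ is $1$, $2$, $3$ gives a representation of the relation algebra $31_{65}$, and this representation is minimal: no representation of $31_{65}$ has fewer than $15$ vertices.
   Context: A cycle type is the multiset of colors of the sides of a triangle, e.g. $caa$ = one side $c$, two sides $a$. $31_{65}$ is the finite symmetric integral relation algebra with atoms $1',a,b,c$ whose mandatory diversity cycle types are exactly $aaa, bbb, ccc, abb, baa, caa, abc$ (so $acc, bcc, cbb$ are forbidden). A representation on a set $X$ (its vertices) is a coloring of all 2-element subsets of $X$ by $a,b,c$, each color used, such that: for every mandatory type $\{h,i,j\}$, every edge $\{x,y\}$ colored $h$ (for each choice of $h$ among the type's colors) and each ordering $(i,j)$ of the remaining two colors, some $z$ has $\{x,z\}$ colored $i$, $\{z,y\}$ colored $j$; and no triangle of a forbidden type occurs. *)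

theory Defs
  imports Main "HOL-Library.Multiset"
begin

datatype color = A | B | C

definition mandatory_31_65 :: "color multiset set" where
  "mandatory_31_65 = {{#A,A,A#}, {#B,B,B#}, {#C,C,C#}, {#A,B,B#}, {#B,A,A#}, {#C,A,A#}, {#A,B,C#}}"

definition forbidden_31_65 :: "color multiset set" where
  "forbidden_31_65 = {{#A,C,C#}, {#B,C,C#}, {#C,B,B#}}"

text \<open>A representation of 31_65 on the vertex set X: a colouring of all 2-element subsets
  (given as a symmetric function on pairs of distinct vertices), every colour used,
  every mandatory type witnessed for every edge and ordering, no forbidden triangle.\<close>
definition is_rep_31_65 :: "'a set \<Rightarrow> ('a \<Rightarrow> 'a \<Rightarrow> color) \<Rightarrow> bool" where
  "is_rep_31_65 X col \<longleftrightarrow>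
     (\<forall>x\<in>X. \<forall>y\<in>X. x \<noteq> y \<longrightarrow> col x y = col y x) \<and>
     (\<forall>h. \<exists>x\<in>X. \<exists>y\<in>X. x \<noteq> y \<and> col x y = h) \<and>
     (\<forall>h i j. {#h, i, j#} \<in> mandatory_31_65 \<longrightarrow>
        (\<forall>x\<in>X. \<forall>y\<in>X. x \<noteq> y \<longrightarrow> col x y = h \<longrightarrow>
           (\<exists>z\<in>X. z \<noteq> x \<and> z \<noteq> y \<and> col x z = i \<and> col z y = j))) \<and>
     (\<forall>x\<in>X. \<forall>y\<in>X. \<forall>z\<in>X. x \<noteq> y \<longrightarrow> y \<noteq> z \<longrightarrow> x \<noteq> z \<longrightarrow>
        {#col x y, col y z, col x z#} \<notin> forbidden_31_65)"

inductive walk :: "('v \<Rightarrow> 'v \<Rightarrow> bool) \<Rightarrow> 'v \<Rightarrow> 'v \<Rightarrow> nat \<Rightarrow> bool" for E where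
  walk_nil: "walk E x x 0"
| walk_cons: "E x y \<Longrightarrow> walk E y z n \<Longrightarrow> walk E x z (Suc n)"

definition gdist :: "('v \<Rightarrow> 'v \<Rightarrow> bool) \<Rightarrow> 'v \<Rightarrow> 'v \<Rightarrow> nat" where
  "gdist E x y = (LEAST n. walk E x y n)"

definition petersen_V :: "nat set set" where
  "petersen_V = {S. S \<subseteq> {0..<5} \<and> card S = 2}"

definition petersen_adj :: "nat set \<Rightarrow> nat set \<Rightarrow> bool" where
  "petersen_adj u v \<longleftrightarrow> u \<in> petersen_V \<and> v \<in> petersen_V \<and> u \<inter> v = {}"

definition L_V :: "nat set set set" where
  "L_V = {{u, v} | u v. petersen_adj u v}"

definition L_adj :: "nat set set \<Rightarrow> nat set set \<Rightarrow> bool" where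
  "L_adj e f \<longleftrightarrow> e \<in> L_V \<and> f \<in> L_V \<and> e \<noteq> f \<and> e \<inter> f \<noteq> {}"

definition L_col :: "nat set set \<Rightarrow> nat set set \<Rightarrow> color" where
  "L_col e f = (if gdist L_adj e f = 1 then B else if gdist L_adj e f = 2 then A else C)"

end

theory Submission
  imports Defs
begin

datatype V = V0 | V1 | V2 | V3 | V4 | V5 | V6 | V7 | V8 | V9 | V10 | V11 | V12 | V13 | V14

definition edV :: "V \<Rightarrow> nat set set" where
 "edV = case_V {{0,1}, {2,3}} {{0,1}, {2,4}} {{0,1}, {3,4}} {{0,2}, {1,3}} {{0,2}, {1,4}} {{0,2}, {3,4}} {{0,3}, {1,2}} {{0,3}, {1,4}} {{0,3}, {2,4}} {{0,4}, {1,2}} {{0,4}, {1,3}} {{0,4}, {2,3}} {{1,2}, {3,4}} {{1,3}, {2,4}} {{1,4}, {2,3}}"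

definition adjV :: "V \<Rightarrow> V \<Rightarrow> bool" where
 "adjV = case_V (case_V False True True False False False False False False False False True False False True) (case_V True False True False False False False False True False False False False True False) (case_V True True False False False True False False False False False False True False False) (case_V False False False False True True False False False False True False False True False) (case_V False False False True False True False True False False False False False False True) (case_V False False True True True False False False False False False False True False False) (case_V False False False False False False False True True True False False True False False) (case_V False False False False True False True False True False False False False False True) (case_V False True False False False False True True False False False False False True False) (case_V False False False False False False True False False False True True True False False) (case_V False False False True False False False False False True False True False True False) (case_V True False False False False False False False False True True False False False True) (case_V False False True False False True True False False True False False False False False) (case_V False True False True False False False False True False True False False False False) (case_V True False False False True False False True False False False True False False False)"

definition dV :: "V \<Rightarrow> V \<Rightarrow> nat" where
 "dV = case_V (case_V 0 1 1 3 2 2 3 2 2 2 2 1 2 2 1) (case_V 1 0 1 2 3 2 2 2 1 3 2 2 2 1 2) (case_V 1 1 0 2 2 1 2 3 2 2 3 2 1 2 2) (case_V 3 2 2 0 1 1 3 2 2 2 1 2 2 1 2) (case_V 2 3 2 1 0 1 2 1 2 3 2 2 2 2 1) (case_V 2 2 1 1 1 0 2 2 3 2 2 3 1 2 2) (case_V 3 2 2 3 2 2 0 1 1 1 2 2 1 2 2) (case_V 2 2 3 2 1 2 1 0 1 2 3 2 2 2 1) (case_V 2 1 2 2 2 3 1 1 0 2 2 3 2 1 2) (case_V 2 3 2 2 3 2 1 2 2 0 1 1 1 2 2) (case_V 2 2 3 1 2 2 2 3 2 1 0 1 2 1 2) (case_V 1 2 2 2 2 3 2 2 3 1 1 0 2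 2 1) (case_V 2 2 1 2 2 1 1 2 2 1 2 2 0 3 3) (case_V 2 1 2 1 2 2 2 2 1 2 1 2 3 0 3) (case_V 1 2 2 2 1 2 2 1 2 2 2 1 3 3 0)"

definition nxt :: "V \<Rightarrow> V \<Rightarrow> V" where
 "nxt = case_V (case_V V0 V1 V2 V1 V14 V2 V1 V14 V1 V11 V11 V11 V2 V1 V14) (case_V V0 V1 V2 V13 V0 V2 V8 V8 V8 V0 V13 V0 V2 V13 V0) (case_V V0 V1 V2 V5 V5 V5 V12 V0 V1 V12 V0 V0 V12 V1 V0) (case_V V4 V13 V5 V3 V4 V5 V4 V4 V13 V10 V10 V10 V5 V13 V4) (case_V V14 V3 V5 V3 V4 V5 V7 V7 V7 V3 V3 V14 V5 V3 V14) (case_V V2 V2 V2 V3 V4 V5 V12 V4 V2 V12 V3 V2 V12 V3 V4) (case_V V7 V8 V12 V7 V7 V12 V6 V7 V8 V9 V9 V9 V12 V8 V7) (case_V V14 V8 V4 V4 V4 V4 V6 V7 V8 V6 V4 V14 V6 V8 V14) (case_V V1 V1 V1 V13 V7 V1 V6 V7 V8 V6 V13 V1 V6 V13 V7) (case_V V11 V6 V12 V10 V6 V12 V6 V6 V6 V9 V10 V11 V12 V10 V11) (case_V V11 V13 V3 V3 V3 V3 V9 V3 V13 V9 V10 V11 V9 V13 V11) (case_V V0 V0 V0 V10 V14 V0 V9 V14 V0 V9 V10 V11 V9 V10 V14) (case_V V2 V2 V2 V5 V5 V5 V6 V6 V6 V9 V9 V9 V12 V2 V2) (case_V V1 V1 V1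 V3 V3 V3 V8 V8 V8 V10 V10 V10 V1 V13 V1) (case_V V0 V0 V0 V4 V4 V4 V7 V7 V7 V11 V11 V11 V0 V0 V14)"

definition wit :: "V \<Rightarrow> V \<Rightarrow> color \<Rightarrow> color \<Rightarrow> V" where
 "wit = case_V (case_V (case_color (case_color V4 V0 V0) (case_color V0 V1 V0) (case_color V0 V0 V3)) (case_color (case_color V5 V8 V4) (case_color V11 V2 V0) (case_color V3 V0 V0)) (case_color (case_color V4 V5 V7) (case_color V11 V1 V0) (case_color V3 V0 V0)) (case_color (case_color V7 V4 V0) (case_color V1 V0 V0) (case_color V0 V0 V6)) (case_color (case_color V8 V5 V9) (case_color V2 V14 V1) (case_color V6 V3 V0)) (case_color (case_color V7 V4 V8) (case_color V1 V2 V11) (case_color V6 V3 V0)) (case_color (case_color V4 V7 V0) (case_color V1 V0 V0) (case_color V0 V0 V3)) (case_color (case_color V5 V4 V10) (case_color V1 V14 V2) (case_color V3 V6 V0)) (case_color (case_color V4 V7 V5) (case_color V2 V1 V11) (case_color V3 V6 V0)) (case_color (case_color V5 V10 V4) (case_color V2 V11 V1) (case_color V3 V6 V0)) (case_color (case_color V4 V9 V7) (case_color V1 V11 V2) (case_color V6 V3 V0)) (case_color (case_color V4 V9 V5) (case_color V1 V14 V0) (case_color V3 V0 V0)) (case_color (case_color V4 V5 V13) (case_color V1 V2 V14) (case_color V3 V6 V0)) (case_color (case_color V4 V8 V12) (case_color V2 V1 V14) (case_color V6 V3 V0)) (case_color (case_color V5 V4 V12) (case_color V1 V11 V0) (case_color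 V3 V0 V0))) (case_V (case_color (case_color V5 V11 V3) (case_color V8 V2 V0) (case_color V4 V0 V0)) (case_color (case_color V3 V0 V0) (case_color V0 V0 V0) (case_color V0 V0 V4)) (case_color (case_color V3 V5 V7) (case_color V8 V0 V0) (case_color V4 V0 V0)) (case_color (case_color V7 V5 V6) (case_color V2 V13 V0) (case_color V9 V4 V0)) (case_color (case_color V6 V3 V0) (case_color V0 V0 V0) (case_color V0 V0 V9)) (case_color (case_color V6 V3 V11) (case_color V0 V2 V8) (case_color V9 V4 V0)) (case_color (case_color V5 V7 V3) (case_color V2 V8 V0) (case_color V4 V9 V0)) (case_color (case_color V3 V6 V10) (case_color V0 V8 V2) (case_color V9 V4 V0)) (case_color (case_color V3 V6 V5) (case_color V0 V13 V0) (case_color V4 V0 V0)) (case_color (case_color V3 V6 V0) (case_color V0 V0 V0) (case_color V0 V0 V4)) (case_color (case_color V5 V3 V7) (case_color V0 V13 V2) (case_color V4 V9 V0)) (case_color (case_color V3 V10 V5) (case_color V2 V0 V8) (case_color V4 V9 V0)) (case_color (case_color V3 V5 V14) (case_color V0 V2 V13) (case_color V4 V9 V0)) (case_color (case_color V5 V3 V12) (case_color V0 V8 V0) (case_color V4 V0 V0)) (case_color (case_color V3 V7 V12) (case_color V2 V0 V13) (case_color V9 V4 V0))) (case_V (case_color (case_color V4 V11 V3) (case_color V5 V1 V0) (case_color V7 V0 V0)) (case_color (case_color V3 V8 V4) (case_color V5 V0 V0) (case_color V7 V0 V0)) (case_color (case_color V3 V0 V0) (case_color V0 V0 V0) (case_color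 V0 V0 V7)) (case_color (case_color V8 V4 V6) (case_color V1 V5 V0) (case_color V7 V10 V0)) (case_color (case_color V6 V3 V9) (case_color V0 V5 V1) (case_color V10 V7 V0)) (case_color (case_color V6 V3 V8) (case_color V0 V12 V0) (case_color V7 V0 V0)) (case_color (case_color V4 V8 V3) (case_color V1 V12 V0) (case_color V10 V7 V0)) (case_color (case_color V3 V4 V0) (case_color V0 V0 V0) (case_color V0 V0 V10)) (case_color (case_color V3 V6 V11) (case_color V0 V1 V5) (case_color V10 V7 V0)) (case_color (case_color V3 V6 V4) (case_color V0 V12 V1) (case_color V7 V10 V0)) (case_color (case_color V4 V3 V0) (case_color V0 V0 V0) (case_color V0 V0 V7)) (case_color (case_color V3 V9 V8) (case_color V1 V0 V5) (case_color V7 V10 V0)) (case_color (case_color V3 V6 V13) (case_color V0 V5 V0) (case_color V7 V0 V0)) (case_color (case_color V4 V3 V14) (case_color V0 V1 V12) (case_color V7 V10 V0)) (case_color (case_color V3 V4 V13) (case_color V1 V0 V12) (case_color V10 V7 V0))) (case_V (case_color (case_color V7 V1 V0) (case_color V4 V0 V0) (case_color V0 V0 V6)) (case_color (case_color V7 V2 V9) (case_color V5 V13 V4) (case_color V6 V0 V0)) (case_color (case_color V8 V1 V7) (case_color V4 V5 V10) (case_color V6 V0 V0)) (case_color (case_color V1 V0 V0) (case_color V0 V4 V0) (case_color V0 V0 V0)) (case_color (case_color V2 V7 V1) (case_color V10 V5 V0) (case_color V0 V0 V0)) (case_color (case_color V1 V2 V8) (case_color V10 V4 V0) (case_color V0 V0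 V0)) (case_color (case_color V1 V7 V0) (case_color V4 V0 V0) (case_color V0 V0 V0)) (case_color (case_color V1 V8 V2) (case_color V5 V4 V10) (case_color V0 V6 V0)) (case_color (case_color V2 V1 V11) (case_color V4 V13 V5) (case_color V0 V6 V0)) (case_color (case_color V2 V11 V1) (case_color V5 V10 V4) (case_color V0 V6 V0)) (case_color (case_color V1 V9 V2) (case_color V4 V13 V0) (case_color V0 V0 V0)) (case_color (case_color V1 V9 V8) (case_color V4 V10 V5) (case_color V6 V0 V0)) (case_color (case_color V1 V2 V14) (case_color V4 V5 V13) (case_color V0 V6 V0)) (case_color (case_color V2 V1 V12) (case_color V4 V10 V0) (case_color V0 V0 V0)) (case_color (case_color V1 V7 V12) (case_color V5 V4 V13) (case_color V6 V0 V0))) (case_V (case_color (case_color V8 V2 V6) (case_color V5 V14 V3) (case_color V9 V1 V0)) (case_color (case_color V6 V0 V0) (case_color V3 V0 V0) (case_color V0 V0 V9)) (case_color (case_color V6 V0 V10) (case_color V3 V5 V7) (case_color V9 V1 V0)) (case_color (case_color V2 V10 V0) (case_color V7 V5 V0) (case_color V1 V0 V0)) (case_color (case_color V0 V0 V0) (case_color V0 V3 V0) (case_color V0 V0 V1)) (case_color (case_color V0 V2 V8) (case_color V7 V3 V0) (case_color V1 V0 V0)) (case_color (case_color V2 V8 V0) (case_color V5 V7 V3) (case_color V1 V9 V0)) (case_color (case_color V0 V6 V2) (case_color V3 V14 V0) (case_color V1 V0 V0)) (case_color (case_color V0 V6 V11) (case_color V3 V7 V5) (case_color V9 V1 V0))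 (case_color (case_color V0 V6 V0) (case_color V3 V0 V0) (case_color V0 V0 V1)) (case_color (case_color V0 V11 V2) (case_color V5 V3 V7) (case_color V1 V9 V0)) (case_color (case_color V2 V0 V8) (case_color V3 V14 V5) (case_color V1 V9 V0)) (case_color (case_color V0 V2 V13) (case_color V3 V5 V14) (case_color V1 V9 V0)) (case_color (case_color V0 V8 V12) (case_color V5 V3 V14) (case_color V9 V1 V0)) (case_color (case_color V2 V0 V12) (case_color V3 V7 V0) (case_color V1 V0 V0))) (case_V (case_color (case_color V7 V1 V6) (case_color V4 V2 V3) (case_color V8 V11 V0)) (case_color (case_color V6 V0 V9) (case_color V3 V2 V4) (case_color V11 V8 V0)) (case_color (case_color V6 V0 V7) (case_color V3 V12 V0) (case_color V8 V0 V0)) (case_color (case_color V1 V10 V0) (case_color V2 V4 V0) (case_color V8 V0 V0)) (case_color (case_color V0 V7 V1) (case_color V2 V3 V0) (case_color V8 V0 V0)) (case_color (case_color V0 V0 V0) (case_color V0 V2 V0) (case_color V0 V0 V8)) (case_color (case_color V1 V7 V0) (case_color V2 V12 V3) (case_color V11 V8 V0)) (case_color (case_color V0 V6 V10) (case_color V3 V4 V2) (case_color V11 V8 V0)) (case_color (case_color V0 V1 V0) (case_color V2 V0 V0) (case_color V0 V0 V11)) (case_color (case_color V0 V6 V1) (case_color V2 V12 V4) (case_color V8 V11 V0)) (case_color (case_color V0 V9 V7) (case_color V4 V3 V2) (case_color V8 V11 V0)) (case_color (case_color V1 V0 V0) (case_color V2 V0 V0) (case_color V0 V0 V8)) (case_color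 (case_color V0 V6 V13) (case_color V3 V2 V0) (case_color V8 V0 V0)) (case_color (case_color V0 V1 V14) (case_color V2 V3 V12) (case_color V11 V8 V0)) (case_color (case_color V1 V0 V13) (case_color V2 V4 V12) (case_color V8 V11 V0))) (case_V (case_color (case_color V4 V1 V0) (case_color V7 V0 V0) (case_color V0 V0 V3)) (case_color (case_color V5 V2 V4) (case_color V7 V8 V9) (case_color V3 V0 V0)) (case_color (case_color V4 V1 V10) (case_color V8 V12 V7) (case_color V3 V0 V0)) (case_color (case_color V1 V4 V0) (case_color V7 V0 V0) (case_color V0 V0 V0)) (case_color (case_color V2 V5 V1) (case_color V8 V7 V9) (case_color V0 V3 V0)) (case_color (case_color V1 V2 V11) (case_color V7 V12 V8) (case_color V0 V3 V0)) (case_color (case_color V1 V0 V0) (case_color V0 V7 V0) (case_color V0 V0 V0)) (case_color (case_color V1 V4 V2) (case_color V9 V8 V0) (case_color V0 V0 V0)) (case_color (case_color V2 V1 V5) (case_color V9 V7 V0) (case_color V0 V0 V0)) (case_color (case_color V2 V10 V1) (case_color V7 V12 V0) (case_color V0 V0 V0)) (case_color (case_color V1 V11 V2) (case_color V8 V9 V7) (case_color V0 V3 V0)) (case_color (case_color V1 V10 V5) (case_color V7 V9 V8) (case_color V3 V0 V0)) (case_color (case_color V1 V2 V13) (case_color V7 V9 V0) (case_color V0 V0 V0)) (case_color (case_color V2 V1 V14) (case_color V7 V8 V12) (case_color V0 V3 V0)) (case_color (case_color V1 V4 V13) (case_color V8 V7 V12) (case_color V3 V0 V0))) (case_V (case_color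 (case_color V5 V1 V3) (case_color V4 V14 V6) (case_color V10 V2 V0)) (case_color (case_color V3 V0 V9) (case_color V6 V8 V4) (case_color V10 V2 V0)) (case_color (case_color V3 V0 V0) (case_color V4 V0 V0) (case_color V0 V0 V10)) (case_color (case_color V1 V5 V0) (case_color V8 V4 V6) (case_color V2 V10 V0)) (case_color (case_color V0 V3 V1) (case_color V6 V14 V0) (case_color V2 V0 V0)) (case_color (case_color V0 V3 V11) (case_color V6 V4 V8) (case_color V10 V2 V0)) (case_color (case_color V1 V9 V0) (case_color V4 V8 V0) (case_color V2 V0 V0)) (case_color (case_color V0 V0 V0) (case_color V0 V4 V0) (case_color V0 V0 V2)) (case_color (case_color V0 V1 V5) (case_color V4 V6 V0) (case_color V2 V0 V0)) (case_color (case_color V0 V11 V1) (case_color V8 V6 V4) (case_color V2 V10 V0)) (case_color (case_color V0 V3 V0) (case_color V4 V0 V0) (case_color V0 V0 V2)) (case_color (case_color V1 V0 V5) (case_color V4 V14 V8) (case_color V2 V10 V0)) (case_color (case_color V0 V5 V13) (case_color V4 V6 V14) (case_color V10 V2 V0)) (case_color (case_color V0 V1 V12) (case_color V4 V8 V14) (case_color V2 V10 V0)) (case_color (case_color V1 V0 V12) (case_color V6 V4 V0) (case_color V2 V0 V0))) (case_V (case_color (case_color V4 V2 V3) (case_color V7 V1 V6) (case_color V5 V11 V0)) (case_color (case_color V3 V0 V4) (case_color V6 V13 V0) (case_color V5 V0 V0)) (case_color (case_color V3 V0 V10) (case_color V6 V1 V7) (case_color V11 V5 V0)) (case_color (case_color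 V2 V4 V0) (case_color V1 V13 V6) (case_color V11 V5 V0)) (case_color (case_color V0 V3 V9) (case_color V6 V7 V1) (case_color V11 V5 V0)) (case_color (case_color V0 V2 V0) (case_color V1 V0 V0) (case_color V0 V0 V11)) (case_color (case_color V2 V9 V0) (case_color V1 V7 V0) (case_color V5 V0 V0)) (case_color (case_color V0 V4 V2) (case_color V1 V6 V0) (case_color V5 V0 V0)) (case_color (case_color V0 V0 V0) (case_color V0 V1 V0) (case_color V0 V0 V5)) (case_color (case_color V0 V10 V4) (case_color V7 V6 V1) (case_color V5 V11 V0)) (case_color (case_color V0 V3 V2) (case_color V1 V13 V7) (case_color V5 V11 V0)) (case_color (case_color V2 V0 V0) (case_color V1 V0 V0) (case_color V0 V0 V5)) (case_color (case_color V0 V2 V14) (case_color V1 V6 V13) (case_color V11 V5 V0)) (case_color (case_color V0 V3 V12) (case_color V6 V1 V0) (case_color V5 V0 V0)) (case_color (case_color V2 V0 V12) (case_color V1 V7 V13) (case_color V5 V11 V0))) (case_V (case_color (case_color V5 V2 V3) (case_color V10 V11 V6) (case_color V4 V1 V0)) (case_color (case_color V3 V0 V0) (case_color V6 V0 V0) (case_color V0 V0 V4)) (case_color (case_color V3 V0 V7) (case_color V6 V12 V10) (case_color V4 V1 V0)) (case_color (case_color V2 V5 V0) (case_color V11 V10 V6) (case_color V1 V4 V0)) (case_color (case_color V0 V3 V0) (case_color V6 V0 V0) (case_color V0 V0 V1)) (case_color (case_color V0 V2 V8) (case_color V6 V12 V11) (case_color V1 V4 V0)) (case_color (case_color V2 V7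 V0) (case_color V10 V12 V0) (case_color V1 V0 V0)) (case_color (case_color V0 V8 V2) (case_color V11 V6 V10) (case_color V1 V4 V0)) (case_color (case_color V0 V7 V5) (case_color V10 V6 V11) (case_color V4 V1 V0)) (case_color (case_color V0 V0 V0) (case_color V0 V6 V0) (case_color V0 V0 V1)) (case_color (case_color V0 V3 V2) (case_color V6 V11 V0) (case_color V1 V0 V0)) (case_color (case_color V2 V0 V5) (case_color V6 V10 V0) (case_color V1 V0 V0)) (case_color (case_color V0 V2 V13) (case_color V10 V6 V0) (case_color V1 V0 V0)) (case_color (case_color V0 V3 V14) (case_color V6 V10 V12) (case_color V4 V1 V0)) (case_color (case_color V2 V0 V13) (case_color V6 V11 V12) (case_color V1 V4 V0))) (case_V (case_color (case_color V4 V1 V6) (case_color V9 V11 V3) (case_color V7 V2 V0)) (case_color (case_color V5 V0 V4) (case_color V3 V13 V9) (case_color V7 V2 V0)) (case_color (case_color V4 V0 V0) (case_color V3 V0 V0) (case_color V0 V0 V7)) (case_color (case_color V1 V4 V0) (case_color V9 V13 V0) (case_color V2 V0 V0)) (case_color (case_color V0 V5 V1) (case_color V11 V3 V9) (case_color V2 V7 V0)) (case_color (case_color V0 V4 V8) (case_color V9 V3 V11) (case_color V7 V2 V0)) (case_color (case_color V1 V8 V0) (case_color V11 V9 V3) (case_color V2 V7 V0)) (case_color (case_color V0 V4 V0) (case_color V3 V0 V0) (case_color V0 V0 V2)) (case_color (case_color V0 V1 V5) (case_color V3 V13 V11) (case_color V2 V7 V0)) (case_color (case_color V0 V6 V1)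 (case_color V3 V11 V0) (case_color V2 V0 V0)) (case_color (case_color V0 V0 V0) (case_color V0 V3 V0) (case_color V0 V0 V2)) (case_color (case_color V1 V0 V5) (case_color V3 V9 V0) (case_color V2 V0 V0)) (case_color (case_color V0 V5 V14) (case_color V3 V9 V13) (case_color V7 V2 V0)) (case_color (case_color V0 V1 V12) (case_color V9 V3 V0) (case_color V2 V0 V0)) (case_color (case_color V1 V0 V12) (case_color V3 V11 V13) (case_color V2 V7 V0))) (case_V (case_color (case_color V4 V1 V3) (case_color V9 V14 V0) (case_color V5 V0 V0)) (case_color (case_color V3 V2 V4) (case_color V10 V0 V9) (case_color V5 V8 V0)) (case_color (case_color V3 V1 V7) (case_color V9 V0 V10) (case_color V8 V5 V0)) (case_color (case_color V1 V4 V6) (case_color V9 V10 V0) (case_color V8 V5 V0)) (case_color (case_color V2 V3 V1) (case_color V0 V14 V9) (case_color V8 V5 V0)) (case_color (case_color V1 V2 V0) (case_color V0 V0 V0) (case_color V0 V0 V8)) (case_color (case_color V1 V7 V3) (case_color V10 V9 V0) (case_color V5 V8 V0)) (case_color (case_color V1 V4 V2) (case_color V0 V14 V10) (case_color V5 V8 V0)) (case_color (case_color V2 V1 V0) (case_color V0 V0 V0) (case_color V0 V0 V5)) (case_color (case_color V2 V6 V1) (case_color V0 V10 V0) (case_color V5 V0 V0)) (case_color (case_color V1 V3 V2) (case_color V0 V9 V0) (case_color V5 V0 V0)) (case_color (case_color V1 V0 V0) (case_color V0 V0 V0) (case_color V0 V0 V5)) (case_color (case_color V1 V2 V13) (case_color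 V0 V9 V14) (case_color V8 V5 V0)) (case_color (case_color V2 V1 V12) (case_color V0 V10 V14) (case_color V5 V8 V0)) (case_color (case_color V1 V4 V12) (case_color V9 V0 V0) (case_color V5 V0 V0))) (case_V (case_color (case_color V4 V1 V3) (case_color V5 V2 V6) (case_color V13 V14 V0)) (case_color (case_color V3 V0 V4) (case_color V5 V2 V9) (case_color V14 V13 V0)) (case_color (case_color V3 V0 V7) (case_color V6 V5 V0) (case_color V13 V0 V0)) (case_color (case_color V1 V4 V0) (case_color V2 V5 V6) (case_color V14 V13 V0)) (case_color (case_color V0 V3 V1) (case_color V2 V5 V9) (case_color V13 V14 V0)) (case_color (case_color V0 V3 V8) (case_color V6 V2 V0) (case_color V13 V0 V0)) (case_color (case_color V1 V7 V0) (case_color V2 V9 V0) (case_color V13 V0 V0)) (case_color (case_color V0 V4 V10) (case_color V5 V6 V2) (case_color V13 V14 V0)) (case_color (case_color V0 V1 V11) (case_color V2 V6 V5) (case_color V14 V13 V0)) (case_color (case_color V0 V10 V1) (case_color V2 V6 V0) (case_color V13 V0 V0)) (case_color (case_color V0 V3 V7) (case_color V5 V9 V2) (case_color V14 V13 V0)) (case_color (case_color V1 V0 V8) (case_color V2 V9 V5) (case_color V13 V14 V0)) (case_color (case_color V0 V0 V0) (case_color V0 V2 V0) (case_color V0 V0 V13)) (case_color (case_color V0 V1 V0) (case_color V2 V0 V0) (case_color V0 V0 V14)) (case_color (case_color V1 V0 V0) (case_color V2 V0 V0) (case_color V0 V0 V13))) (case_V (case_color (case_color V4 V2 V6) (case_color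 V8 V1 V3) (case_color V12 V14 V0)) (case_color (case_color V5 V0 V4) (case_color V3 V8 V0) (case_color V12 V0 V0)) (case_color (case_color V4 V0 V7) (case_color V3 V1 V10) (case_color V14 V12 V0)) (case_color (case_color V2 V4 V0) (case_color V1 V10 V0) (case_color V12 V0 V0)) (case_color (case_color V0 V5 V9) (case_color V8 V3 V1) (case_color V12 V14 V0)) (case_color (case_color V0 V2 V11) (case_color V1 V3 V8) (case_color V14 V12 V0)) (case_color (case_color V2 V7 V0) (case_color V1 V8 V3) (case_color V14 V12 V0)) (case_color (case_color V0 V4 V2) (case_color V1 V8 V10) (case_color V12 V14 V0)) (case_color (case_color V0 V6 V5) (case_color V3 V1 V0) (case_color V12 V0 V0)) (case_color (case_color V0 V6 V4) (case_color V3 V10 V1) (case_color V14 V12 V0)) (case_color (case_color V0 V9 V2) (case_color V1 V3 V0) (case_color V12 V0 V0)) (case_color (case_color V2 V0 V5) (case_color V1 V10 V8) (case_color V12 V14 V0)) (case_color (case_color V0 V2 V0) (case_color V1 V0 V0) (case_color V0 V0 V14)) (case_color (case_color V0 V0 V0) (case_color V0 V1 V0) (case_color V0 V0 V12)) (case_color (case_color V2 V0 V0) (case_color V1 V0 V0) (case_color V0 V0 V12))) (case_V (case_color (case_color V5 V1 V3) (case_color V4 V11 V0) (case_color V12 V0 V0)) (case_color (case_color V3 V2 V9) (case_color V7 V0 V4) (case_color V12 V13 V0)) (case_color (case_color V3 V1 V10) (case_color V4 V0 V7) (case_color V13 V12 V0)) (case_color (case_color V1 V5 V6) (case_color V7 V4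 V0) (case_color V12 V13 V0)) (case_color (case_color V2 V3 V1) (case_color V0 V7 V0) (case_color V12 V0 V0)) (case_color (case_color V1 V2 V8) (case_color V0 V4 V11) (case_color V13 V12 V0)) (case_color (case_color V1 V8 V3) (case_color V4 V7 V0) (case_color V13 V12 V0)) (case_color (case_color V1 V6 V2) (case_color V0 V4 V0) (case_color V12 V0 V0)) (case_color (case_color V2 V1 V5) (case_color V0 V7 V11) (case_color V12 V13 V0)) (case_color (case_color V2 V6 V1) (case_color V0 V11 V4) (case_color V13 V12 V0)) (case_color (case_color V1 V3 V2) (case_color V0 V11 V7) (case_color V12 V13 V0)) (case_color (case_color V1 V9 V5) (case_color V4 V0 V0) (case_color V12 V0 V0)) (case_color (case_color V1 V2 V0) (case_color V0 V0 V0) (case_color V0 V0 V13)) (case_color (case_color V2 V1 V0) (case_color V0 V0 V0) (case_color V0 V0 V12)) (case_color (case_color V1 V0 V0) (case_color V0 V0 V0) (case_color V0 V0 V12)))"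

lemma dV_rows:
  "dV V0 = (case_V 0 1 1 3 2 2 3 2 2 2 2 1 2 2 1)"
  "dV V1 = (case_V 1 0 1 2 3 2 2 2 1 3 2 2 2 1 2)"
  "dV V2 = (case_V 1 1 0 2 2 1 2 3 2 2 3 2 1 2 2)"
  "dV V3 = (case_V 3 2 2 0 1 1 3 2 2 2 1 2 2 1 2)"
  "dV V4 = (case_V 2 3 2 1 0 1 2 1 2 3 2 2 2 2 1)"
  "dV V5 = (case_V 2 2 1 1 1 0 2 2 3 2 2 3 1 2 2)"
  "dV V6 = (case_V 3 2 2 3 2 2 0 1 1 1 2 2 1 2 2)"
  "dV V7 = (case_V 2 2 3 2 1 2 1 0 1 2 3 2 2 2 1)"
  "dV V8 = (case_V 2 1 2 2 2 3 1 1 0 2 2 3 2 1 2)"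
  "dV V9 = (case_V 2 3 2 2 3 2 1 2 2 0 1 1 1 2 2)"
  "dV V10 = (case_V 2 2 3 1 2 2 2 3 2 1 0 1 2 1 2)"
  "dV V11 = (case_V 1 2 2 2 2 3 2 2 3 1 1 0 2 2 1)"
  "dV V12 = (case_V 2 2 1 2 2 1 1 2 2 1 2 2 0 3 3)"
  "dV V13 = (case_V 2 1 2 1 2 2 2 2 1 2 1 2 3 0 3)"
  "dV V14 = (case_V 1 2 2 2 1 2 2 1 2 2 2 1 3 3 0)"
  by (simp_all add: dV_def)

lemma adjV_rows:
  "adjV V0 = (case_V False True True False False False False False False False False True False False True)"
  "adjV V1 = (case_V True False True False False False False False True False False False False True False)"
  "adjV V2 = (case_V True True False False False True False False False False False False True False False)"
  "adjV V3 = (case_V False False False False True True False False False False True False False True False)"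
  "adjV V4 = (case_V False False False True False True False True False False False False False False True)"
  "adjV V5 = (case_V False False True True True False False False False False False False True False False)"
  "adjV V6 = (case_V False False False False False False False True True True False False True False False)"
  "adjV V7 = (case_V False False False False True False True False True False False False False False True)"
  "adjV V8 = (case_V False True False False False False True True False False False False False True False)"
  "adjV V9 = (case_V False False False False False False True False False False True True True False False)"
  "adjV V10 = (case_V False False False True False False False False False True False True False True False)"
  "adjV V11 = (case_V True False False False False False False False False True True False False False True)"
  "adjV V12 = (case_V False False True False False True True False False True False False False False False)"
  "adjV V13 = (case_V False True False True False False False False True False True False False False False)"
  "adjV V14 = (case_V True False False False True False False True False False False True False False False)"
  by (simp_all add: adjV_def)

lemma nxt_rows:
  "nxt V0 = (case_V V0 V1 V2 V1 V14 V2 V1 V14 V1 V11 V11 V11 V2 V1 V14)"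
  "nxt V1 = (case_V V0 V1 V2 V13 V0 V2 V8 V8 V8 V0 V13 V0 V2 V13 V0)"
  "nxt V2 = (case_V V0 V1 V2 V5 V5 V5 V12 V0 V1 V12 V0 V0 V12 V1 V0)"
  "nxt V3 = (case_V V4 V13 V5 V3 V4 V5 V4 V4 V13 V10 V10 V10 V5 V13 V4)"
  "nxt V4 = (case_V V14 V3 V5 V3 V4 V5 V7 V7 V7 V3 V3 V14 V5 V3 V14)"
  "nxt V5 = (case_V V2 V2 V2 V3 V4 V5 V12 V4 V2 V12 V3 V2 V12 V3 V4)"
  "nxt V6 = (case_V V7 V8 V12 V7 V7 V12 V6 V7 V8 V9 V9 V9 V12 V8 V7)"
  "nxt V7 = (case_V V14 V8 V4 V4 V4 V4 V6 V7 V8 V6 V4 V14 V6 V8 V14)"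
  "nxt V8 = (case_V V1 V1 V1 V13 V7 V1 V6 V7 V8 V6 V13 V1 V6 V13 V7)"
  "nxt V9 = (case_V V11 V6 V12 V10 V6 V12 V6 V6 V6 V9 V10 V11 V12 V10 V11)"
  "nxt V10 = (case_V V11 V13 V3 V3 V3 V3 V9 V3 V13 V9 V10 V11 V9 V13 V11)"
  "nxt V11 = (case_V V0 V0 V0 V10 V14 V0 V9 V14 V0 V9 V10 V11 V9 V10 V14)"
  "nxt V12 = (case_V V2 V2 V2 V5 V5 V5 V6 V6 V6 V9 V9 V9 V12 V2 V2)"
  "nxt V13 = (case_V V1 V1 V1 V3 V3 V3 V8 V8 V8 V10 V10 V10 V1 V13 V1)"
  "nxt V14 = (case_V V0 V0 V0 V4 V4 V4 V7 V7 V7 V11 V11 V11 V0 V0 V14)"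
  by (simp_all add: nxt_def)

definition mandC :: "color \<Rightarrow> color \<Rightarrow> color \<Rightarrow> bool" where
 "mandC = case_color (case_color (case_color True True True) (case_color True True True) (case_color True True False)) (case_color (case_color True True True) (case_color True True False) (case_color True False False)) (case_color (case_color True True False) (case_color True False False) (case_color False False True))"

definition forbC :: "color \<Rightarrow> color \<Rightarrow> color \<Rightarrow> bool" where
 "forbC = case_color (case_color (case_color False False False) (case_color False False False) (case_color False False True)) (case_color (case_color False False False) (case_color False False True) (case_color False True True)) (case_color (case_color False False True) (case_color False True True) (case_color True True False))"

lemma edV_rows:
  "edV V0 = {{0,1}, {2,3}}"
  "edV V1 = {{0,1}, {2,4}}"
  "edV V2 = {{0,1}, {3,4}}"
  "edV V3 = {{0,2}, {1,3}}"
  "edV V4 = {{0,2}, {1,4}}"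
  "edV V5 = {{0,2}, {3,4}}"
  "edV V6 = {{0,3}, {1,2}}"
  "edV V7 = {{0,3}, {1,4}}"
  "edV V8 = {{0,3}, {2,4}}"
  "edV V9 = {{0,4}, {1,2}}"
  "edV V10 = {{0,4}, {1,3}}"
  "edV V11 = {{0,4}, {2,3}}"
  "edV V12 = {{1,2}, {3,4}}"
  "edV V13 = {{1,3}, {2,4}}"
  "edV V14 = {{1,4}, {2,3}}"
  by (simp_all add: edV_def)

lemma wit_rows:
  "wit V0 = (case_V (case_color (case_color V4 V0 V0) (case_color V0 V1 V0) (case_color V0 V0 V3)) (case_color (case_color V5 V8 V4) (case_color V11 V2 V0) (case_color V3 V0 V0)) (case_color (case_color V4 V5 V7) (case_color V11 V1 V0) (case_color V3 V0 V0)) (case_color (case_color V7 V4 V0) (case_color V1 V0 V0) (case_color V0 V0 V6)) (case_color (case_color V8 V5 V9) (case_color V2 V14 V1) (case_color V6 V3 V0)) (case_color (case_color V7 V4 V8) (case_color V1 V2 V11) (case_color V6 V3 V0)) (case_color (case_color V4 V7 V0) (case_color V1 V0 V0) (case_color V0 V0 V3)) (case_color (case_color V5 V4 V10) (case_color V1 V14 V2) (case_color V3 V6 V0)) (case_color (case_color V4 V7 V5) (case_color V2 V1 V11) (case_color V3 V6 V0)) (case_color (case_color V5 V10 V4) (case_color V2 V11 V1) (case_color V3 V6 V0)) (case_color (case_color V4 V9 V7) (case_color V1 V11 V2) (case_color V6 V3 V0)) (case_color (case_color V4 V9 V5) (case_color V1 V14 V0) (case_color V3 V0 V0)) (case_color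 (case_color V4 V5 V13) (case_color V1 V2 V14) (case_color V3 V6 V0)) (case_color (case_color V4 V8 V12) (case_color V2 V1 V14) (case_color V6 V3 V0)) (case_color (case_color V5 V4 V12) (case_color V1 V11 V0) (case_color V3 V0 V0)))"
  "wit V1 = (case_V (case_color (case_color V5 V11 V3) (case_color V8 V2 V0) (case_color V4 V0 V0)) (case_color (case_color V3 V0 V0) (case_color V0 V0 V0) (case_color V0 V0 V4)) (case_color (case_color V3 V5 V7) (case_color V8 V0 V0) (case_color V4 V0 V0)) (case_color (case_color V7 V5 V6) (case_color V2 V13 V0) (case_color V9 V4 V0)) (case_color (case_color V6 V3 V0) (case_color V0 V0 V0) (case_color V0 V0 V9)) (case_color (case_color V6 V3 V11) (case_color V0 V2 V8) (case_color V9 V4 V0)) (case_color (case_color V5 V7 V3) (case_color V2 V8 V0) (case_color V4 V9 V0)) (case_color (case_color V3 V6 V10) (case_color V0 V8 V2) (case_color V9 V4 V0)) (case_color (case_color V3 V6 V5) (case_color V0 V13 V0) (case_color V4 V0 V0)) (case_color (case_color V3 V6 V0) (case_color V0 V0 V0) (case_color V0 V0 V4)) (case_color (case_color V5 V3 V7) (case_color V0 V13 V2) (case_color V4 V9 V0)) (case_color (case_color V3 V10 V5) (case_color V2 V0 V8) (case_color V4 V9 V0)) (case_color (case_color V3 V5 V14) (case_color V0 V2 V13) (case_color V4 V9 V0)) (case_color (case_color V5 V3 V12) (case_color V0 V8 V0) (case_color V4 V0 V0)) (case_color (case_color V3 V7 V12) (case_color V2 V0 V13) (case_color V9 V4 V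0)))"
  "wit V2 = (case_V (case_color (case_color V4 V11 V3) (case_color V5 V1 V0) (case_color V7 V0 V0)) (case_color (case_color V3 V8 V4) (case_color V5 V0 V0) (case_color V7 V0 V0)) (case_color (case_color V3 V0 V0) (case_color V0 V0 V0) (case_color V0 V0 V7)) (case_color (case_color V8 V4 V6) (case_color V1 V5 V0) (case_color V7 V10 V0)) (case_color (case_color V6 V3 V9) (case_color V0 V5 V1) (case_color V10 V7 V0)) (case_color (case_color V6 V3 V8) (case_color V0 V12 V0) (case_color V7 V0 V0)) (case_color (case_color V4 V8 V3) (case_color V1 V12 V0) (case_color V10 V7 V0)) (case_color (case_color V3 V4 V0) (case_color V0 V0 V0) (case_color V0 V0 V10)) (case_color (case_color V3 V6 V11) (case_color V0 V1 V5) (case_color V10 V7 V0)) (case_color (case_color V3 V6 V4) (case_color V0 V12 V1) (case_color V7 V10 V0)) (case_color (case_color V4 V3 V0) (case_color V0 V0 V0) (case_color V0 V0 V7)) (case_color (case_color V3 V9 V8) (case_color V1 V0 V5) (case_color V7 V10 V0)) (case_color (case_color V3 V6 V13) (case_color V0 V5 V0) (case_color V7 V0 V0)) (case_color (case_color V4 V3 V14) (case_color V0 V1 V12) (case_color V7 V10 V0)) (case_color (case_color V3 V4 V13) (case_color V1 V0 V12) (case_color V10 V7 V0)))"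
  "wit V3 = (case_V (case_color (case_color V7 V1 V0) (case_color V4 V0 V0) (case_color V0 V0 V6)) (case_color (case_color V7 V2 V9) (case_color V5 V13 V4) (case_color V6 V0 V0)) (case_color (case_color V8 V1 V7) (case_color V4 V5 V10) (case_color V6 V0 V0)) (case_color (case_color V1 V0 V0) (case_color V0 V4 V0) (case_color V0 V0 V0)) (case_color (case_color V2 V7 V1) (case_color V10 V5 V0) (case_color V0 V0 V0)) (case_color (case_color V1 V2 V8) (case_color V10 V4 V0) (case_color V0 V0 V0)) (case_color (case_color V1 V7 V0) (case_color V4 V0 V0) (case_color V0 V0 V0)) (case_color (case_color V1 V8 V2) (case_color V5 V4 V10) (case_color V0 V6 V0)) (case_color (case_color V2 V1 V11) (case_color V4 V13 V5) (case_color V0 V6 V0)) (case_color (case_color V2 V11 V1) (case_color V5 V10 V4) (case_color V0 V6 V0)) (case_color (case_color V1 V9 V2) (case_color V4 V13 V0) (case_color V0 V0 V0)) (case_color (case_color V1 V9 V8) (case_color V4 V10 V5) (case_color V6 V0 V0)) (case_color (case_color V1 V2 V14) (case_color V4 V5 V13) (case_color V0 V6 V0)) (case_color (case_color V2 V1 V12) (case_color V4 V10 V0) (case_color V0 V0 V0)) (case_color (case_color V1 V7 V12) (case_color V5 V4 V13) (case_color V6 V0 V0)))"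
  "wit V4 = (case_V (case_color (case_color V8 V2 V6) (case_color V5 V14 V3) (case_color V9 V1 V0)) (case_color (case_color V6 V0 V0) (case_color V3 V0 V0) (case_color V0 V0 V9)) (case_color (case_color V6 V0 V10) (case_color V3 V5 V7) (case_color V9 V1 V0)) (case_color (case_color V2 V10 V0) (case_color V7 V5 V0) (case_color V1 V0 V0)) (case_color (case_color V0 V0 V0) (case_color V0 V3 V0) (case_color V0 V0 V1)) (case_color (case_color V0 V2 V8) (case_color V7 V3 V0) (case_color V1 V0 V0)) (case_color (case_color V2 V8 V0) (case_color V5 V7 V3) (case_color V1 V9 V0)) (case_color (case_color V0 V6 V2) (case_color V3 V14 V0) (case_color V1 V0 V0)) (case_color (case_color V0 V6 V11) (case_color V3 V7 V5) (case_color V9 V1 V0)) (case_color (case_color V0 V6 V0) (case_color V3 V0 V0) (case_color V0 V0 V1)) (case_color (case_color V0 V11 V2) (case_color V5 V3 V7) (case_color V1 V9 V0)) (case_color (case_color V2 V0 V8) (case_color V3 V14 V5) (case_color V1 V9 V0)) (case_color (case_color V0 V2 V13) (case_color V3 V5 V14) (case_color V1 V9 V0)) (case_color (case_color V0 V8 V12) (case_color V5 V3 V14) (case_color V9 V1 V0)) (case_color (case_color V2 V0 V12) (case_color V3 V7 V0) (case_color V1 V0 V0)))"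
  "wit V5 = (case_V (case_color (case_color V7 V1 V6) (case_color V4 V2 V3) (case_color V8 V11 V0)) (case_color (case_color V6 V0 V9) (case_color V3 V2 V4) (case_color V11 V8 V0)) (case_color (case_color V6 V0 V7) (case_color V3 V12 V0) (case_color V8 V0 V0)) (case_color (case_color V1 V10 V0) (case_color V2 V4 V0) (case_color V8 V0 V0)) (case_color (case_color V0 V7 V1) (case_color V2 V3 V0) (case_color V8 V0 V0)) (case_color (case_color V0 V0 V0) (case_color V0 V2 V0) (case_color V0 V0 V8)) (case_color (case_color V1 V7 V0) (case_color V2 V12 V3) (case_color V11 V8 V0)) (case_color (case_color V0 V6 V10) (case_color V3 V4 V2) (case_color V11 V8 V0)) (case_color (case_color V0 V1 V0) (case_color V2 V0 V0) (case_color V0 V0 V11)) (case_color (case_color V0 V6 V1) (case_color V2 V12 V4) (case_color V8 V11 V0)) (case_color (case_color V0 V9 V7) (case_color V4 V3 V2) (case_color V8 V11 V0)) (case_color (case_color V1 V0 V0) (case_color V2 V0 V0) (case_color V0 V0 V8)) (case_color (case_color V0 V6 V13) (case_color V3 V2 V0) (case_color V8 V0 V0)) (case_color (case_color V0 V1 V14) (case_color V2 V3 V12) (case_color V11 V8 V0)) (case_color (case_color V1 V0 V13) (case_color V2 V4 V12) (case_color V8 V11 V0)))"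
  "wit V6 = (case_V (case_color (case_color V4 V1 V0) (case_color V7 V0 V0) (case_color V0 V0 V3)) (case_color (case_color V5 V2 V4) (case_color V7 V8 V9) (case_color V3 V0 V0)) (case_color (case_color V4 V1 V10) (case_color V8 V12 V7) (case_color V3 V0 V0)) (case_color (case_color V1 V4 V0) (case_color V7 V0 V0) (case_color V0 V0 V0)) (case_color (case_color V2 V5 V1) (case_color V8 V7 V9) (case_color V0 V3 V0)) (case_color (case_color V1 V2 V11) (case_color V7 V12 V8) (case_color V0 V3 V0)) (case_color (case_color V1 V0 V0) (case_color V0 V7 V0) (case_color V0 V0 V0)) (case_color (case_color V1 V4 V2) (case_color V9 V8 V0) (case_color V0 V0 V0)) (case_color (case_color V2 V1 V5) (case_color V9 V7 V0) (case_color V0 V0 V0)) (case_color (case_color V2 V10 V1) (case_color V7 V12 V0) (case_color V0 V0 V0)) (case_color (case_color V1 V11 V2) (case_color V8 V9 V7) (case_color V0 V3 V0)) (case_color (case_color V1 V10 V5) (case_color V7 V9 V8) (case_color V3 V0 V0)) (case_color (case_color V1 V2 V13) (case_color V7 V9 V0) (case_color V0 V0 V0)) (case_color (case_color V2 V1 V14) (case_color V7 V8 V12) (case_color V0 V3 V0)) (case_color (case_color V1 V4 V13) (case_color V8 V7 V12) (case_color V3 V0 V0)))"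
  "wit V7 = (case_V (case_color (case_color V5 V1 V3) (case_color V4 V14 V6) (case_color V10 V2 V0)) (case_color (case_color V3 V0 V9) (case_color V6 V8 V4) (case_color V10 V2 V0)) (case_color (case_color V3 V0 V0) (case_color V4 V0 V0) (case_color V0 V0 V10)) (case_color (case_color V1 V5 V0) (case_color V8 V4 V6) (case_color V2 V10 V0)) (case_color (case_color V0 V3 V1) (case_color V6 V14 V0) (case_color V2 V0 V0)) (case_color (case_color V0 V3 V11) (case_color V6 V4 V8) (case_color V10 V2 V0)) (case_color (case_color V1 V9 V0) (case_color V4 V8 V0) (case_color V2 V0 V0)) (case_color (case_color V0 V0 V0) (case_color V0 V4 V0) (case_color V0 V0 V2)) (case_color (case_color V0 V1 V5) (case_color V4 V6 V0) (case_color V2 V0 V0)) (case_color (case_color V0 V11 V1) (case_color V8 V6 V4) (case_color V2 V10 V0)) (case_color (case_color V0 V3 V0) (case_color V4 V0 V0) (case_color V0 V0 V2)) (case_color (case_color V1 V0 V5) (case_color V4 V14 V8) (case_color V2 V10 V0)) (case_color (case_color V0 V5 V13) (case_color V4 V6 V14) (case_color V10 V2 V0)) (case_color (case_color V0 V1 V12) (case_color V4 V8 V14) (case_color V2 V10 V0)) (case_color (case_color V1 V0 V12) (case_color V6 V4 V0) (case_color V2 V0 V0)))"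
  "wit V8 = (case_V (case_color (case_color V4 V2 V3) (case_color V7 V1 V6) (case_color V5 V11 V0)) (case_color (case_color V3 V0 V4) (case_color V6 V13 V0) (case_color V5 V0 V0)) (case_color (case_color V3 V0 V10) (case_color V6 V1 V7) (case_color V11 V5 V0)) (case_color (case_color V2 V4 V0) (case_color V1 V13 V6) (case_color V11 V5 V0)) (case_color (case_color V0 V3 V9) (case_color V6 V7 V1) (case_color V11 V5 V0)) (case_color (case_color V0 V2 V0) (case_color V1 V0 V0) (case_color V0 V0 V11)) (case_color (case_color V2 V9 V0) (case_color V1 V7 V0) (case_color V5 V0 V0)) (case_color (case_color V0 V4 V2) (case_color V1 V6 V0) (case_color V5 V0 V0)) (case_color (case_color V0 V0 V0) (case_color V0 V1 V0) (case_color V0 V0 V5)) (case_color (case_color V0 V10 V4) (case_color V7 V6 V1) (case_color V5 V11 V0)) (case_color (case_color V0 V3 V2) (case_color V1 V13 V7) (case_color V5 V11 V0)) (case_color (case_color V2 V0 V0) (case_color V1 V0 V0) (case_color V0 V0 V5)) (case_color (case_color V0 V2 V14) (case_color V1 V6 V13) (case_color V11 V5 V0)) (case_color (case_color V0 V3 V12) (case_color V6 V1 V0) (case_color V5 V0 V0)) (case_color (case_color V2 V0 V12) (case_color V1 V7 V13) (case_color V5 V11 V0)))"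
  "wit V9 = (case_V (case_color (case_color V5 V2 V3) (case_color V10 V11 V6) (case_color V4 V1 V0)) (case_color (case_color V3 V0 V0) (case_color V6 V0 V0) (case_color V0 V0 V4)) (case_color (case_color V3 V0 V7) (case_color V6 V12 V10) (case_color V4 V1 V0)) (case_color (case_color V2 V5 V0) (case_color V11 V10 V6) (case_color V1 V4 V0)) (case_color (case_color V0 V3 V0) (case_color V6 V0 V0) (case_color V0 V0 V1)) (case_color (case_color V0 V2 V8) (case_color V6 V12 V11) (case_color V1 V4 V0)) (case_color (case_color V2 V7 V0) (case_color V10 V12 V0) (case_color V1 V0 V0)) (case_color (case_color V0 V8 V2) (case_color V11 V6 V10) (case_color V1 V4 V0)) (case_color (case_color V0 V7 V5) (case_color V10 V6 V11) (case_color V4 V1 V0)) (case_color (case_color V0 V0 V0) (case_color V0 V6 V0) (case_color V0 V0 V1)) (case_color (case_color V0 V3 V2) (case_color V6 V11 V0) (case_color V1 V0 V0)) (case_color (case_color V2 V0 V5) (case_color V6 V10 V0) (case_color V1 V0 V0)) (case_color (case_color V0 V2 V13) (case_color V10 V6 V0) (case_color V1 V0 V0)) (case_color (case_color V0 V3 V14) (case_color V6 V10 V12) (case_color V4 V1 V0)) (case_color (case_color V2 V0 V13) (case_color V6 V11 V12) (case_color V1 V4 V0)))"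
  "wit V10 = (case_V (case_color (case_color V4 V1 V6) (case_color V9 V11 V3) (case_color V7 V2 V0)) (case_color (case_color V5 V0 V4) (case_color V3 V13 V9) (case_color V7 V2 V0)) (case_color (case_color V4 V0 V0) (case_color V3 V0 V0) (case_color V0 V0 V7)) (case_color (case_color V1 V4 V0) (case_color V9 V13 V0) (case_color V2 V0 V0)) (case_color (case_color V0 V5 V1) (case_color V11 V3 V9) (case_color V2 V7 V0)) (case_color (case_color V0 V4 V8) (case_color V9 V3 V11) (case_color V7 V2 V0)) (case_color (case_color V1 V8 V0) (case_color V11 V9 V3) (case_color V2 V7 V0)) (case_color (case_color V0 V4 V0) (case_color V3 V0 V0) (case_color V0 V0 V2)) (case_color (case_color V0 V1 V5) (case_color V3 V13 V11) (case_color V2 V7 V0)) (case_color (case_color V0 V6 V1) (case_color V3 V11 V0) (case_color V2 V0 V0)) (case_color (case_color V0 V0 V0) (case_color V0 V3 V0) (case_color V0 V0 V2)) (case_color (case_color V1 V0 V5) (case_color V3 V9 V0) (case_color V2 V0 V0)) (case_color (case_color V0 V5 V14) (case_color V3 V9 V13) (case_color V7 V2 V0)) (case_color (case_color V0 V1 V12) (case_color V9 V3 V0) (case_color V2 V0 V0)) (case_color (case_color V1 V0 V12) (case_color V3 V11 V13) (case_color V2 V7 V0)))"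
  "wit V11 = (case_V (case_color (case_color V4 V1 V3) (case_color V9 V14 V0) (case_color V5 V0 V0)) (case_color (case_color V3 V2 V4) (case_color V10 V0 V9) (case_color V5 V8 V0)) (case_color (case_color V3 V1 V7) (case_color V9 V0 V10) (case_color V8 V5 V0)) (case_color (case_color V1 V4 V6) (case_color V9 V10 V0) (case_color V8 V5 V0)) (case_color (case_color V2 V3 V1) (case_color V0 V14 V9) (case_color V8 V5 V0)) (case_color (case_color V1 V2 V0) (case_color V0 V0 V0) (case_color V0 V0 V8)) (case_color (case_color V1 V7 V3) (case_color V10 V9 V0) (case_color V5 V8 V0)) (case_color (case_color V1 V4 V2) (case_color V0 V14 V10) (case_color V5 V8 V0)) (case_color (case_color V2 V1 V0) (case_color V0 V0 V0) (case_color V0 V0 V5)) (case_color (case_color V2 V6 V1) (case_color V0 V10 V0) (case_color V5 V0 V0)) (case_color (case_color V1 V3 V2) (case_color V0 V9 V0) (case_color V5 V0 V0)) (case_color (case_color V1 V0 V0) (case_color V0 V0 V0) (case_color V0 V0 V5)) (case_color (case_color V1 V2 V13) (case_color V0 V9 V14) (case_color V8 V5 V0)) (case_color (case_color V2 V1 V12) (case_color V0 V10 V14) (case_color V5 V8 V0)) (case_color (case_color V1 V4 V12) (case_color V9 V0 V0) (case_color V5 V0 V0)))"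
  "wit V12 = (case_V (case_color (case_color V4 V1 V3) (case_color V5 V2 V6) (case_color V13 V14 V0)) (case_color (case_color V3 V0 V4) (case_color V5 V2 V9) (case_color V14 V13 V0)) (case_color (case_color V3 V0 V7) (case_color V6 V5 V0) (case_color V13 V0 V0)) (case_color (case_color V1 V4 V0) (case_color V2 V5 V6) (case_color V14 V13 V0)) (case_color (case_color V0 V3 V1) (case_color V2 V5 V9) (case_color V13 V14 V0)) (case_color (case_color V0 V3 V8) (case_color V6 V2 V0) (case_color V13 V0 V0)) (case_color (case_color V1 V7 V0) (case_color V2 V9 V0) (case_color V13 V0 V0)) (case_color (case_color V0 V4 V10) (case_color V5 V6 V2) (case_color V13 V14 V0)) (case_color (case_color V0 V1 V11) (case_color V2 V6 V5) (case_color V14 V13 V0)) (case_color (case_color V0 V10 V1) (case_color V2 V6 V0) (case_color V13 V0 V0)) (case_color (case_color V0 V3 V7) (case_color V5 V9 V2) (case_color V14 V13 V0)) (case_color (case_color V1 V0 V8) (case_color V2 V9 V5) (case_color V13 V14 V0)) (case_color (case_color V0 V0 V0) (case_color V0 V2 V0) (case_color V0 V0 V13)) (case_color (case_color V0 V1 V0) (case_color V2 V0 V0) (case_color V0 V0 V14)) (case_color (case_color V1 V0 V0) (case_color V2 V0 V0) (case_color V0 V0 V13)))"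
  "wit V13 = (case_V (case_color (case_color V4 V2 V6) (case_color V8 V1 V3) (case_color V12 V14 V0)) (case_color (case_color V5 V0 V4) (case_color V3 V8 V0) (case_color V12 V0 V0)) (case_color (case_color V4 V0 V7) (case_color V3 V1 V10) (case_color V14 V12 V0)) (case_color (case_color V2 V4 V0) (case_color V1 V10 V0) (case_color V12 V0 V0)) (case_color (case_color V0 V5 V9) (case_color V8 V3 V1) (case_color V12 V14 V0)) (case_color (case_color V0 V2 V11) (case_color V1 V3 V8) (case_color V14 V12 V0)) (case_color (case_color V2 V7 V0) (case_color V1 V8 V3) (case_color V14 V12 V0)) (case_color (case_color V0 V4 V2) (case_color V1 V8 V10) (case_color V12 V14 V0)) (case_color (case_color V0 V6 V5) (case_color V3 V1 V0) (case_color V12 V0 V0)) (case_color (case_color V0 V6 V4) (case_color V3 V10 V1) (case_color V14 V12 V0)) (case_color (case_color V0 V9 V2) (case_color V1 V3 V0) (case_color V12 V0 V0)) (case_color (case_color V2 V0 V5) (case_color V1 V10 V8) (case_color V12 V14 V0)) (case_color (case_color V0 V2 V0) (case_color V1 V0 V0) (case_color V0 V0 V14)) (case_color (case_color V0 V0 V0) (case_color V0 V1 V0) (case_color V0 V0 V12)) (case_color (case_color V2 V0 V0) (case_color V1 V0 V0) (case_color V0 V0 V12)))"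
  "wit V14 = (case_V (case_color (case_color V5 V1 V3) (case_color V4 V11 V0) (case_color V12 V0 V0)) (case_color (case_color V3 V2 V9) (case_color V7 V0 V4) (case_color V12 V13 V0)) (case_color (case_color V3 V1 V10) (case_color V4 V0 V7) (case_color V13 V12 V0)) (case_color (case_color V1 V5 V6) (case_color V7 V4 V0) (case_color V12 V13 V0)) (case_color (case_color V2 V3 V1) (case_color V0 V7 V0) (case_color V12 V0 V0)) (case_color (case_color V1 V2 V8) (case_color V0 V4 V11) (case_color V13 V12 V0)) (case_color (case_color V1 V8 V3) (case_color V4 V7 V0) (case_color V13 V12 V0)) (case_color (case_color V1 V6 V2) (case_color V0 V4 V0) (case_color V12 V0 V0)) (case_color (case_color V2 V1 V5) (case_color V0 V7 V11) (case_color V12 V13 V0)) (case_color (case_color V2 V6 V1) (case_color V0 V11 V4) (case_color V13 V12 V0)) (case_color (case_color V1 V3 V2) (case_color V0 V11 V7) (case_color V12 V13 V0)) (case_color (case_color V1 V9 V5) (case_color V4 V0 V0) (case_color V12 V0 V0)) (case_color (case_color V1 V2 V0) (case_color V0 V0 V0) (case_color V0 V0 V13)) (case_color (case_color V2 V1 V0) (case_color V0 V0 V0) (case_color V0 V0 V12)) (case_color (case_color V1 V0 V0) (case_color V0 V0 V0) (case_color V0 V0 V12)))"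
  by (simp_all add: wit_def)

lemma UNIV_V: "(UNIV :: V set) = {V0, V1, V2, V3, V4, V5, V6, V7, V8, V9, V10, V11, V12, V13, V14}"
  using V.exhaust by auto

lemma range_edV: "range edV = {{{0,1}, {2,3}}, {{0,1}, {2,4}}, {{0,1}, {3,4}}, {{0,2}, {1,3}}, {{0,2}, {1,4}}, {{0,2}, {3,4}}, {{0,3}, {1,2}}, {{0,3}, {1,4}}, {{0,3}, {2,4}}, {{0,4}, {1,2}}, {{0,4}, {1,3}}, {{0,4}, {2,3}}, {{1,2}, {3,4}}, {{1,3}, {2,4}}, {{1,4}, {2,3}}}"
  by (simp add: UNIV_V edV_rows)

lemma petV: "petersen_V = {{0,1}, {0,2}, {0,3}, {0,4}, {1,2}, {1,3}, {1,4}, {2,3}, {2,4}, {3,4}}"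
  apply (rule set_eqI)
  apply (rule iffI)
  subgoal for S
  proof -
    assume "S \<in> petersen_V"
    hence S: "S \<subseteq> {0..<5}" "card S = 2" by (auto simp: petersen_V_def)
    then obtain a b where ab: "S = {a,b}" "a \<noteq> b" by (meson card_2_iff)
    have "a \<in> {0..<5}" "b \<in> {0..<5}" using S ab by auto
    hence "a \<in> {0,1,2,3,4}" "b \<in> {0,1,2,3,4}" by auto
    thus ?thesis using ab by (auto simp: doubleton_eq_iff insert_commute)
  qed
  by (auto simp: petersen_V_def)

lemma memL: "petersen_adj u v \<Longrightarrow> {u,v} \<in> L_V"
  unfolding L_V_def by blast

lemma LV: "L_V = range edV"
proof
  show "L_V \<subseteq> range edV"
  proof
    fix e assume "e \<in> L_V"
    then obtain u v where e: "e = {u,v}" "u \<in> petersen_V" "v \<in> petersen_V" "u \<inter> v = {}"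
      unfolding L_V_def petersen_adj_def by blast
    show "e \<in> range edV"
      using e(2,3,4) unfolding e(1) range_edV petV
      by (simp only: insert_iff empty_iff) (elim disjE; simp add: doubleton_eq_iff)
  qed
  show "range edV \<subseteq> L_V"
  proof (rule image_subsetI)
    fix k show "edV k \<in> L_V"
      by (cases k; simp only: edV_rows; rule memL; simp add: petersen_adj_def petV)
  qed
qed

lemma edV_inj: "edV k = edV l \<longleftrightarrow> k = l"
  by (cases k; cases l; simp add: edV_rows doubleton_eq_iff)

lemma card_LV: "card L_V = 15"
proof -
  have "card L_V = card (UNIV :: V set)"
    unfolding LV by (rule card_image) (simp add: inj_on_def edV_inj)
  also have "\<dots> = 15" by (simp add: UNIV_V)
  finally show ?thesis .
qed

lemma adj_iff: "L_adj (edV k) (edV l) \<longleftrightarrow> adjV k l"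
proof -
  have "L_adj (edV k) (edV l) \<longleftrightarrow> k \<noteq> l \<and> edV k \<inter> edV l \<noteq> {}"
    unfolding L_adj_def LV by (auto simp: edV_inj)
  also have "\<dots> \<longleftrightarrow> adjV k l"
    by (cases k; cases l; simp add: edV_rows adjV_rows doubleton_eq_iff)
  finally show ?thesis .
qed

lemma walk_0: "walk E x y 0 \<longleftrightarrow> x = y"
  by (subst walk.simps) auto

lemma walk_Suc: "walk E x y (Suc n) \<longleftrightarrow> (\<exists>w. E x w \<and> walk E w y n)"
  by (subst walk.simps) auto

primrec walkV :: "V \<Rightarrow> V \<Rightarrow> nat \<Rightarrow> bool" where
  "walkV k l 0 = (k = l)"
| "walkV k l (Suc n) = (\<exists>m. adjV k m \<and> walkV m l n)"

lemma walk_iff: "walk L_adj (edV k) (edV l) n \<longleftrightarrow> walkV k l n"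
proof (induction n arbitrary: k)
  case 0
  then show ?case by (simp add: walk_0 edV_inj)
next
  case (Suc n)
  have "walk L_adj (edV k) (edV l) (Suc n) \<longleftrightarrow> (\<exists>m. L_adj (edV k) (edV m) \<and> walk L_adj (edV m) (edV l) n)"
  proof -
    have "\<And>w. L_adj (edV k) w \<Longrightarrow> w \<in> range edV" unfolding L_adj_def LV by blast
    thus ?thesis unfolding walk_Suc by blast
  qed
  also have "\<dots> \<longleftrightarrow> walkV k l (Suc n)" using Suc by (simp add: adj_iff)
  finally show ?case .
qed

lemma dV_refl: "dV k k = 0"
  by (cases k; simp add: dV_rows)

lemma dV_zero: "dV k l = 0 \<Longrightarrow> k = l"
  by (cases k; cases l; simp add: dV_rows)

lemma tri: "adjV k m \<Longrightarrow> dV k l \<le> Suc (dV m l)"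
  by (cases k; cases m; cases l; simp add: dV_rows adjV_rows)

lemma nxt_ok: "dV k l = Suc d \<Longrightarrow> adjV k (nxt k l) \<and> dV (nxt k l) l = d"
  by (cases k; cases l; simp add: dV_rows adjV_rows nxt_rows)

lemma walkV_ge: "walkV k l n \<Longrightarrow> dV k l \<le> n"
proof (induction n arbitrary: k)
  case 0 thus ?case by (simp add: dV_refl)
next
  case (Suc n)
  then obtain m where "adjV k m" "walkV m l n" by auto
  thus ?case using Suc.IH tri[of k m l] by fastforce
qed

lemma walkV_d: "walkV k l (dV k l)"
proof -
  have "\<And>k. dV k l = d \<Longrightarrow> walkV k l d" for d
  proof (induction d)
    case 0 thus ?case using dV_zero by simp
  next
    case (Suc d k)
    thus ?case using nxt_ok[OF Suc.prems] Suc.IH by auto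
  qed
  thus ?thesis by blast
qed

lemma gdist_edV: "gdist L_adj (edV k) (edV l) = dV k l"
  unfolding gdist_def walk_iff
  by (rule Least_equality) (auto simp: walkV_d walkV_ge)

definition colV :: "V \<Rightarrow> V \<Rightarrow> color" where
  "colV k l = (if dV k l = 1 then B else if dV k l = 2 then A else C)"

lemma col_edV: "L_col (edV k) (edV l) = colV k l"
  by (simp add: L_col_def colV_def gdist_edV)

lemma dV_range: "k \<noteq> l \<Longrightarrow> dV k l \<in> {1,2,3}"
  by (cases k; cases l; simp add: dV_rows)

lemma colV_sym: "colV k l = colV l k"
  unfolding colV_def by (cases k; cases l; simp add: dV_rows)

lemma allC: "(\<forall>a::color. P a) \<longleftrightarrow> P A \<and> P B \<and> P C"
  by (metis color.exhaust)

lemma mand_iff: "{#h,i,j#} \<in> mandatory_31_65 \<longleftrightarrow> mandC h i j"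
  by (cases h; cases i; cases j; simp add: mandatory_31_65_def mandC_def multiset_eq_iff allC)

lemma forb_iff: "{#h,i,j#} \<in> forbidden_31_65 \<longleftrightarrow> forbC h i j"
  by (cases h; cases i; cases j; simp add: forbidden_31_65_def forbC_def multiset_eq_iff allC)

lemma wit_ok: "k \<noteq> l \<Longrightarrow> mandC (colV k l) i j \<Longrightarrow>
   wit k l i j \<noteq> k \<and> wit k l i j \<noteq> l \<and> colV k (wit k l i j) = i \<and> colV (wit k l i j) l = j"
  unfolding colV_def
  by (cases k; cases l; cases i; cases j; simp add: dV_rows wit_rows mandC_def)

lemma forb_ok: "k \<noteq> l \<Longrightarrow> l \<noteq> m \<Longrightarrow> k \<noteq> m \<Longrightarrow> \<not> forbC (colV k l) (colV l m) (colV k m)"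
  unfolding colV_def
  by (cases k; cases l; cases m; simp add: dV_rows forbC_def)

lemma rep: "is_rep_31_65 L_V L_col"
  unfolding is_rep_31_65_def LV
proof (intro conjI)
  show "\<forall>x\<in>range edV. \<forall>y\<in>range edV. x \<noteq> y \<longrightarrow> L_col x y = L_col y x"
    by (auto simp: col_edV colV_sym)
  show "\<forall>h. \<exists>x\<in>range edV. \<exists>y\<in>range edV. x \<noteq> y \<and> L_col x y = h"
  proof
    fix h show "\<exists>x\<in>range edV. \<exists>y\<in>range edV. x \<noteq> y \<and> L_col x y = h"
    proof (cases h)
      case A
      have "edV V0 \<noteq> edV V4 \<and> L_col (edV V0) (edV V4) = h"
        using A by (simp add: edV_inj col_edV colV_def dV_rows)
      thus ?thesis by blast
    next
      case B
      have "edV V0 \<noteq> edV V1 \<and> L_col (edV V0) (edV V1) = h"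
        using B by (simp add: edV_inj col_edV colV_def dV_rows)
      thus ?thesis by blast
    next
      case C
      have "edV V0 \<noteq> edV V3 \<and> L_col (edV V0) (edV V3) = h"
        using C by (simp add: edV_inj col_edV colV_def dV_rows)
      thus ?thesis by blast
    qed
  qed
  show "\<forall>h i j. {#h, i, j#} \<in> mandatory_31_65 \<longrightarrow>
     (\<forall>x\<in>range edV. \<forall>y\<in>range edV. x \<noteq> y \<longrightarrow> L_col x y = h \<longrightarrow>
        (\<exists>z\<in>range edV. z \<noteq> x \<and> z \<noteq> y \<and> L_col x z = i \<and> L_col z y = j))"
  proof (intro allI impI ballI)
    fix h i j x y
    assume M: "{#h, i, j#} \<in> mandatory_31_65" and x: "x \<in> range edV" and y: "y \<in> range edV"
      and xy: "x \<noteq> y" and h: "L_col x y = h"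
    obtain k l where kl: "x = edV k" "y = edV l" using x y by blast
    have "k \<noteq> l" using xy kl by auto
    have "mandC (colV k l) i j" using M h kl by (simp add: mand_iff col_edV)
    note W = wit_ok[OF \<open>k \<noteq> l\<close> this]
    show "\<exists>z\<in>range edV. z \<noteq> x \<and> z \<noteq> y \<and> L_col x z = i \<and> L_col z y = j"
      apply (rule bexI[of _ "edV (wit k l i j)"])
      using W kl by (auto simp: edV_inj col_edV)
  qed
  show "\<forall>x\<in>range edV. \<forall>y\<in>range edV. \<forall>z\<in>range edV. x \<noteq> y \<longrightarrow> y \<noteq> z \<longrightarrow> x \<noteq> z \<longrightarrow>
        {#L_col x y, L_col y z, L_col x z#} \<notin> forbidden_31_65"
    using forb_ok by (auto simp: edV_inj col_edV forb_iff)
qed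

lemma dist_range: "\<forall>e\<in>L_V. \<forall>f\<in>L_V. e \<noteq> f \<longrightarrow> gdist L_adj e f \<in> {1, 2, 3}"
  unfolding LV using dV_range by (auto simp: gdist_edV edV_inj)

lemma mand_facts:
  "{#B,B,B#} \<in> mandatory_31_65" "{#B,B,A#} \<in> mandatory_31_65"
  "{#C,C,C#} \<in> mandatory_31_65" "{#C,B,A#} \<in> mandatory_31_65"
  by (simp_all add: mandatory_31_65_def add_mset_commute)

lemma forb_fact: "{#B,B,C#} \<in> forbidden_31_65"
  by (simp add: forbidden_31_65_def add_mset_commute)

lemma bdeg4:
  assumes R: "is_rep_31_65 X col" and x: "x \<in> X" and y: "y \<in> X" "x \<noteq> y" "col x y = B"
  and fin: "finite X"
  shows "4 \<le> card {w\<in>X. w \<noteq> x \<and> col x w = B}"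
proof -
  let ?N = "{w\<in>X. w \<noteq> x \<and> col x w = B}"
  have sym: "\<And>u v. u \<in> X \<Longrightarrow> v \<in> X \<Longrightarrow> u \<noteq> v \<Longrightarrow> col u v = col v u"
    using R unfolding is_rep_31_65_def by blast
  have M: "\<And>h i j u v. {#h,i,j#} \<in> mandatory_31_65 \<Longrightarrow> u \<in> X \<Longrightarrow> v \<in> X \<Longrightarrow> u \<noteq> v \<Longrightarrow> col u v = h \<Longrightarrow>
        \<exists>z\<in>X. z \<noteq> u \<and> z \<noteq> v \<and> col u z = i \<and> col z v = j"
    using R unfolding is_rep_31_65_def by blast
  have bb: "\<exists>z\<in>?N. z \<noteq> v \<and> col z v = B" if "v \<in> ?N" for v
    using M[OF mand_facts(1), of x v] that x by auto
  have ba: "\<exists>z\<in>?N. z \<noteq> v \<and> col z v = A" if "v \<in> ?N" for v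
    using M[OF mand_facts(2), of x v] that x by auto
  have yN: "y \<in> ?N" using y by auto
  obtain z1 where z1: "z1 \<in> ?N" "z1 \<noteq> y" "col z1 y = B" using bb[OF yN] by blast
  obtain z2 where z2: "z2 \<in> ?N" "z2 \<noteq> y" "col z2 y = A" using ba[OF yN] by blast
  have "z1 \<noteq> z2" using z1 z2 by auto
  show ?thesis
  proof (rule ccontr)
    assume "\<not> ?thesis"
    hence c3: "card ?N \<le> 3" by simp
    have sub: "{y,z1,z2} \<subseteq> ?N" using yN z1 z2 by auto
    have "card {y,z1,z2} = 3" using z1 z2 \<open>z1 \<noteq> z2\<close> by auto
    hence eq: "?N = {y,z1,z2}"
      using card_subset_eq[OF _ sub] fin c3 card_mono[OF _ sub] by (metis (no_types, lifting) finite_subset le_antisym mem_Collect_eq subsetI)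
    obtain w where w: "w \<in> ?N" "w \<noteq> z2" "col w z2 = B" using bb[of z2] z2 by blast
    have "w = z1"
    proof -
      have "w \<in> {y,z1,z2}" using w eq by blast
      moreover have "w \<noteq> y" using w z2 sym[of y z2] yN by auto
      ultimately show ?thesis using w by blast
    qed
    obtain u where u: "u \<in> ?N" "u \<noteq> z1" "col u z1 = A" using ba[of z1] z1 by blast
    have "u \<in> {y,z1,z2}" using u eq by blast
    moreover have "u \<noteq> y" using u z1 sym[of y z1] yN by auto
    moreover have "u \<noteq> z2" using u w \<open>w = z1\<close> sym[of z1 z2] z1 z2 by auto
    ultimately show False using u by blast
  qed
qed

lemma minimal:
  assumes R: "is_rep_31_65 X col" and fin: "finite X"
  shows "15 \<le> card X"
proof -
  have sym: "\<And>u v. u \<in> X \<Longrightarrow> v \<in> X \<Longrightarrow> u \<noteq> v \<Longrightarrow> col u v = col v u"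
    using R unfolding is_rep_31_65_def by blast
  have M: "\<And>h i j u v. {#h,i,j#} \<in> mandatory_31_65 \<Longrightarrow> u \<in> X \<Longrightarrow> v \<in> X \<Longrightarrow> u \<noteq> v \<Longrightarrow> col u v = h \<Longrightarrow>
        \<exists>z\<in>X. z \<noteq> u \<and> z \<noteq> v \<and> col u z = i \<and> col z v = j"
    using R unfolding is_rep_31_65_def by blast
  have F: "\<And>u v w. u \<in> X \<Longrightarrow> v \<in> X \<Longrightarrow> w \<in> X \<Longrightarrow> u \<noteq> v \<Longrightarrow> v \<noteq> w \<Longrightarrow> u \<noteq> w \<Longrightarrow>
        {#col u v, col v w, col u w#} \<notin> forbidden_31_65"
    using R unfolding is_rep_31_65_def by blast
  obtain x y where xy: "x \<in> X" "y \<in> X" "x \<noteq> y" "col x y = C"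
    using R unfolding is_rep_31_65_def by blast
  obtain z where z: "z \<in> X" "z \<noteq> x" "z \<noteq> y" "col x z = C" "col z y = C"
    using M[OF mand_facts(3) xy] by blast
  let ?N = "\<lambda>v. {w\<in>X. w \<noteq> v \<and> col v w = B}"
  have hasB: "\<exists>w\<in>X. w \<noteq> u \<and> col u w = B" if "u \<in> X" "v \<in> X" "u \<noteq> v" "col u v = C" for u v
    using M[OF mand_facts(4) that] by blast
  have deg: "4 \<le> card (?N u)" if "u \<in> X" "v \<in> X" "u \<noteq> v" "col u v = C" for u v
    using hasB[OF that] bdeg4[OF R \<open>u \<in> X\<close> _ _ _ fin] by blast
  have disj: "?N u \<inter> ?N v = {}" if "u \<in> X" "v \<in> X" "u \<noteq> v" "col u v = C" for u v
  proof (rule ccontr)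
    assume "?N u \<inter> ?N v \<noteq> {}"
    then obtain w where w: "w \<in> X" "w \<noteq> u" "w \<noteq> v" "col u w = B" "col v w = B" by blast
    have "col w v = B" using sym[of v w] w that by auto
    hence "{#col u w, col w v, col u v#} \<in> forbidden_31_65" using w that forb_fact by simp
    thus False using F[of u w v] w that by blast
  qed
  have yx: "col y x = C" using sym xy by metis
  have zx: "col z x = C" using sym z xy by metis
  have yz: "col y z = C" using sym z xy by metis
  have d1: "4 \<le> card (?N x)" using deg[of x y] xy by blast
  have d2: "4 \<le> card (?N y)" using deg[of y x] xy yx by blast
  have d3: "4 \<le> card (?N z)" using deg[of z x] xy z zx by blast
  have D12: "?N x \<inter> ?N y = {}" using disj[of x y] xy by blast
  have D13: "?N x \<inter> ?N z = {}" using disj[of x z] xy z by blast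
  have D23: "?N y \<inter> ?N z = {}" using disj[of y z] xy z yz by blast
  have T: "{x,y,z} \<inter> (?N x \<union> ?N y \<union> ?N z) = {}"
    using xy z yx zx yz by auto
  have finN: "\<And>v. finite (?N v)" using fin by auto
  have "card ({x,y,z} \<union> (?N x \<union> ?N y \<union> ?N z)) = card {x,y,z} + card (?N x \<union> ?N y \<union> ?N z)"
    using T finN by (intro card_Un_disjoint) auto
  also have "card (?N x \<union> ?N y \<union> ?N z) = card (?N x) + card (?N y) + card (?N z)"
    using D12 D13 D23 finN by (simp add: card_Un_disjoint Int_Un_distrib2)
  also have "card {x,y,z} = 3" using xy z by auto
  finally have "card ({x,y,z} \<union> (?N x \<union> ?N y \<union> ?N z)) \<ge> 15" using d1 d2 d3 by linarith
  moreover have "{x,y,z} \<union> (?N x \<union> ?N y \<union> ?N z) \<subseteq> X" using xy z by auto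
  ultimately show ?thesis using card_mono[OF fin] by (meson order_trans)
qed


theorem mainTheorem11:
  shows "card L_V = 15 \<and>
    (\<forall>e\<in>L_V. \<forall>f\<in>L_V. e \<noteq> f \<longrightarrow> gdist L_adj e f \<in> {1, 2, 3}) \<and>
    is_rep_31_65 L_V L_col \<and>
    (\<forall>(X :: 'a set) col. is_rep_31_65 X col \<longrightarrow> infinite X \<or> 15 \<le> card X)"
  using card_LV dist_range rep minimal by blast

end
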